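(* Let $w=t_x\overline w\in\widehat W$ with $x\in L$, $\overline w\in W_0$. Then $\mathcal{L}_{\Lambda_0}(w)=\frac h2|x|^2-\mathrm{ht}(x)$; in particular $\mathcal{L}_{\Lambda_0}(w)=\mathcal{L}_{\Lambda_0}(t_x)$. Moreover, writing $w=\sigma_jv$ with $\sigma_j\in\Sigma$ and $v\in W$, one has $\mathcal{L}_{\Lambda_0}(\sigma_jv)=\mathcal{L}_{\Lambda_0}(\sigma_jv^0)$, where $v^0$ is the unique element of minimal length in $vW_0$.
   Context: Affine Kac–Moody setting: generalized Cartan matrix $A=(a_{ij})_{0\le i,j\le n}$ of affine type, realization $\Delta=\{\alpha_0,\dots,\alpha_n\}\subset\mathfrak h^*$, $\Delta^\vee\subset\mathfrak h$; $(a_i)$, $(a_i^\vee)$ primitive kernel vectors of $A$, $A^T$; $h=\sum a_i$, $\delta=\sum a_i\alpha_i$, $c=\sum a_i^\vee\alpha_i^\vee$, $\theta=\delta-a_0\alpha_0=\sum_{i\ge1}a_i\alpha_i$. $V_0=\bigoplus_{i\ge1}\mathbb{R}\alpha_i$ with the standard invariant form $(\cdot|\cdot)$. For $x\in V_0$, $t_x(v)=v+\langle v,c\rangle x-((v|x)+\frac12|x|^2\langle v,c\rangle)\delta$. $W_0=\langle s_1,\dots,s_n\rangle$, $M=\mathbb{Z}W_0(\theta/a_0)$, $W=\langle s_0,\dots,s_n\rangle=T(M)\rtimes W_0$. $L\subset V_0$ is the image of the coweight lattice $P_0^\vee=\bigoplus\mathbb{Z}\omega_i^\vee$ of $W_0$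 under the isomorphism $V_0^*\cong V_0$ induced by $(\cdot|\cdot)$; $M\subset L$; the extended affine Weyl group is $\widehat W=T(L)\rtimes W_0$. With $J=\{j\in\{1,\dots,n\}\mid a_j=1\}$, $\sigma_j=t_{\omega_j^\vee}w_{0,j}w_0$ for $j\in J$ ($w_0$ longest element of $W_0$, $w_{0,j}$ longest element of the parabolic subgroup generated by $s_i$, $i\ne j$, $1\le i\le n$), $\Sigma=\{e\}\cup\{\sigma_j\mid j\in J\}$, and every element of $\widehat W$ is uniquely $\sigma v$ with $\sigma\in\Sigma$, $v\in W$. $\rho^\vee\in\mathfrak h$ with $\langle\alpha_i,\rho^\vee\rangle=1$ for all $i$; $\mathcal{L}_{\Lambda_0}(g)=\langle\Lambda_0-g\Lambda_0,\rho^\vee\rangle$ for $g\in GL(\mathfrak h^* )$; $\mathrm{ht}(\sum x_i\alpha_i)=\sum x_i$ (rational coefficients allowed). *)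

theory Defs
  imports "HOL-Analysis.Analysis"
begin

text \<open>Matrices are indexed by 0..n (entries outside are irrelevant).\<close>

definition gcm :: "nat \<Rightarrow> (nat \<Rightarrow> nat \<Rightarrow> int) \<Rightarrow> bool" where
  "gcm n A \<longleftrightarrow> (\<forall>i\<le>n. A i i = 2) \<and> (\<forall>i\<le>n. \<forall>j\<le>n. i \<noteq> j \<longrightarrow> A i j \<le> 0)
     \<and> (\<forall>i\<le>n. \<forall>j\<le>n. A i j = 0 \<longleftrightarrow> A j i = 0)"

definition indecomposable :: "nat \<Rightarrow> (nat \<Rightarrow> nat \<Rightarrow> int) \<Rightarrow> bool" where
  "indecomposable n A \<longleftrightarrow> \<not> (\<exists>I. I \<subseteq> {0..n} \<and> I \<noteq> {} \<and> I \<noteq> {0..n} \<and>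
       (\<forall>i\<in>I. \<forall>j\<in>{0..n} - I. A i j = 0 \<and> A j i = 0))"

definition mat_vec :: "nat \<Rightarrow> (nat \<Rightarrow> nat \<Rightarrow> int) \<Rightarrow> (nat \<Rightarrow> real) \<Rightarrow> nat \<Rightarrow> real" where
  "mat_vec n A v i = (\<Sum>j\<le>n. of_int (A i j) * v j)"

definition affine_type :: "nat \<Rightarrow> (nat \<Rightarrow> nat \<Rightarrow> int) \<Rightarrow> bool" where
  "affine_type n A \<longleftrightarrow> gcm n A \<and> indecomposable n A
     \<and> (\<exists>u. (\<exists>i\<le>n. u i \<noteq> 0) \<and> (\<forall>i\<le>n. mat_vec n A u i = 0) \<and>
            (\<forall>v. (\<forall>i\<le>n. mat_vec n A v i = 0) \<longrightarrow> (\<exists>t. \<forall>i\<le>n. v i = t * u i)))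
     \<and> (\<exists>u. (\<forall>i\<le>n. u i > 0) \<and> (\<forall>i\<le>n. mat_vec n A u i = 0))
     \<and> (\<forall>v. (\<forall>i\<le>n. mat_vec n A v i \<ge> 0) \<longrightarrow> (\<forall>i\<le>n. mat_vec n A v i = 0))"

definition prim_kernel_vec :: "nat \<Rightarrow> (nat \<Rightarrow> nat \<Rightarrow> int) \<Rightarrow> (nat \<Rightarrow> int) \<Rightarrow> bool" where
  "prim_kernel_vec n A a \<longleftrightarrow> (\<forall>i\<le>n. a i > 0) \<and> (\<forall>i\<le>n. (\<Sum>j\<le>n. A i j * a j) = 0)
     \<and> (\<forall>d. (\<forall>i\<le>n. d dvd a i) \<longrightarrow> is_unit d)"

text \<open>h* is a real vector space 'v (of dimension n+2 = 2(n+1) - rank A); h is its dual,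
  represented by linear functionals 'v \<Rightarrow> real; the pairing is evaluation.
  Convention: \<langle>alpha_i^vee, alpha_j\<rangle> = a_ij.\<close>
definition realization :: "nat \<Rightarrow> (nat \<Rightarrow> nat \<Rightarrow> int) \<Rightarrow> (nat \<Rightarrow> 'v::euclidean_space) \<Rightarrow> (nat \<Rightarrow> 'v \<Rightarrow> real) \<Rightarrow> bool" where
  "realization n A \<alpha> \<alpha>v \<longleftrightarrow> DIM('v) = n + 2 \<and> inj_on \<alpha> {0..n} \<and> independent (\<alpha> ` {0..n})
     \<and> (\<forall>i\<le>n. linear (\<alpha>v i))
     \<and> (\<forall>c. (\<forall>lam. (\<Sum>i\<le>n. c i * \<alpha>v i lam) = 0) \<longrightarrow> (\<forall>i\<le>n. c i = 0))
     \<and> (\<forall>i\<le>n. \<forall>j\<le>n. \<alpha>v i (\<alpha> j) = of_int (A i j))"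

definition std_inv_form :: "nat \<Rightarrow> (nat \<Rightarrow> 'v::euclidean_space) \<Rightarrow> (nat \<Rightarrow> 'v \<Rightarrow> real) \<Rightarrow> (nat \<Rightarrow> int) \<Rightarrow> (nat \<Rightarrow> int) \<Rightarrow> ('v \<Rightarrow> 'v \<Rightarrow> real) \<Rightarrow> bool" where
  "std_inv_form n \<alpha> \<alpha>v a av B \<longleftrightarrow> bilinear B \<and> (\<forall>x y. B x y = B y x)
     \<and> (\<forall>x. (\<forall>y. B x y = 0) \<longrightarrow> x = 0)
     \<and> (\<forall>lam. \<forall>i\<le>n. B lam (\<alpha> i) = (of_int (av i) / of_int (a i)) * \<alpha>v i lam)"

definition srefl :: "(nat \<Rightarrow> 'v::real_vector) \<Rightarrow> (nat \<Rightarrow> 'v \<Rightarrow> real) \<Rightarrow> nat \<Rightarrow> 'v \<Rightarrow> 'v" where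
  "srefl \<alpha> \<alpha>v i lam = lam - \<alpha>v i lam *\<^sub>R \<alpha> i"

definition wprod :: "(nat \<Rightarrow> 'v::real_vector) \<Rightarrow> (nat \<Rightarrow> 'v \<Rightarrow> real) \<Rightarrow> nat list \<Rightarrow> 'v \<Rightarrow> 'v" where
  "wprod \<alpha> \<alpha>v ws = foldr (\<lambda>i f. srefl \<alpha> \<alpha>v i \<circ> f) ws id"

text \<open>Group generated by the simple reflections s_i, i \<in> S (the reflections are involutions,
  so the generated monoid is the generated group).\<close>
definition gen_grp :: "(nat \<Rightarrow> 'v::real_vector) \<Rightarrow> (nat \<Rightarrow> 'v \<Rightarrow> real) \<Rightarrow> nat set \<Rightarrow> ('v \<Rightarrow> 'v) set" where
  "gen_grp \<alpha> \<alpha>v S = {wprod \<alpha> \<alpha>v ws | ws. set ws \<subseteq> S}"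

definition wlen :: "(nat \<Rightarrow> 'v::real_vector) \<Rightarrow> (nat \<Rightarrow> 'v \<Rightarrow> real) \<Rightarrow> nat set \<Rightarrow> ('v \<Rightarrow> 'v) \<Rightarrow> nat" where
  "wlen \<alpha> \<alpha>v S g = (LEAST k. \<exists>ws. set ws \<subseteq> S \<and> length ws = k \<and> wprod \<alpha> \<alpha>v ws = g)"

definition longest :: "(nat \<Rightarrow> 'v::real_vector) \<Rightarrow> (nat \<Rightarrow> 'v \<Rightarrow> real) \<Rightarrow> nat set \<Rightarrow> 'v \<Rightarrow> 'v" where
  "longest \<alpha> \<alpha>v S = (THE g. g \<in> gen_grp \<alpha> \<alpha>v S \<and>
       (\<forall>g'\<in>gen_grp \<alpha> \<alpha>v S. wlen \<alpha> \<alpha>v S g' \<le> wlen \<alpha> \<alpha>v S g))"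

definition delta :: "nat \<Rightarrow> (nat \<Rightarrow> int) \<Rightarrow> (nat \<Rightarrow> 'v::real_vector) \<Rightarrow> 'v" where
  "delta n a \<alpha> = (\<Sum>i\<le>n. of_int (a i) *\<^sub>R \<alpha> i)"

text \<open>The canonical central element c = sum a_i^vee alpha_i^vee, as a functional on h*.\<close>
definition cfun :: "nat \<Rightarrow> (nat \<Rightarrow> int) \<Rightarrow> (nat \<Rightarrow> 'v \<Rightarrow> real) \<Rightarrow> 'v \<Rightarrow> real" where
  "cfun n av \<alpha>v lam = (\<Sum>i\<le>n. of_int (av i) * \<alpha>v i lam)"

definition coxnum :: "nat \<Rightarrow> (nat \<Rightarrow> int) \<Rightarrow> int" where
  "coxnum n a = (\<Sum>i\<le>n. a i)"

definition transl :: "nat \<Rightarrow> (nat \<Rightarrow> int) \<Rightarrow> (nat \<Rightarrow> int) \<Rightarrow> (nat \<Rightarrow> 'v::real_vector) \<Rightarrow> (nat \<Rightarrow> 'v \<Rightarrow> real)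
     \<Rightarrow> ('v \<Rightarrow> 'v \<Rightarrow> real) \<Rightarrow> 'v \<Rightarrow> 'v \<Rightarrow> 'v" where
  "transl n a av \<alpha> \<alpha>v B x v = v + cfun n av \<alpha>v v *\<^sub>R x
      - (B v x + 1/2 * B x x * cfun n av \<alpha>v v) *\<^sub>R delta n a \<alpha>"

text \<open>Image in V_0 = span{alpha_1..alpha_n} of the fundamental coweight omega_j^vee under
  V_0^* \<cong> V_0 induced by the form: the y \<in> V_0 with (alpha_k | y) = delta_jk.\<close>
definition omv :: "nat \<Rightarrow> (nat \<Rightarrow> 'v::real_vector) \<Rightarrow> ('v \<Rightarrow> 'v \<Rightarrow> real) \<Rightarrow> nat \<Rightarrow> 'v" where
  "omv n \<alpha> B j = (THE y. y \<in> span (\<alpha> ` {1..n}) \<and>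
       (\<forall>k\<in>{1..n}. B (\<alpha> k) y = (if k = j then 1 else 0)))"

definition coweight_lattice :: "nat \<Rightarrow> (nat \<Rightarrow> 'v::real_vector) \<Rightarrow> ('v \<Rightarrow> 'v \<Rightarrow> real) \<Rightarrow> 'v set" where
  "coweight_lattice n \<alpha> B = {\<Sum>j\<in>{1..n}. of_int (m j) *\<^sub>R omv n \<alpha> B j | m. True}"

definition ht :: "nat \<Rightarrow> (nat \<Rightarrow> 'v::real_vector) \<Rightarrow> 'v \<Rightarrow> real" where
  "ht n \<alpha> x = (THE s. \<exists>c. x = (\<Sum>i\<in>{1..n}. c i *\<^sub>R \<alpha> i) \<and> s = (\<Sum>i\<in>{1..n}. c i))"

definition sigma_j :: "nat \<Rightarrow> (nat \<Rightarrow> int) \<Rightarrow> (nat \<Rightarrow> int) \<Rightarrow> (nat \<Rightarrow> 'v::real_vector) \<Rightarrow> (nat \<Rightarrow> 'v \<Rightarrow> real)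
     \<Rightarrow> ('v \<Rightarrow> 'v \<Rightarrow> real) \<Rightarrow> nat \<Rightarrow> 'v \<Rightarrow> 'v" where
  "sigma_j n a av \<alpha> \<alpha>v B j = transl n a av \<alpha> \<alpha>v B (omv n \<alpha> B j)
       \<circ> longest \<alpha> \<alpha>v ({1..n} - {j}) \<circ> longest \<alpha> \<alpha>v {1..n}"

definition Sigma_set :: "nat \<Rightarrow> (nat \<Rightarrow> int) \<Rightarrow> (nat \<Rightarrow> int) \<Rightarrow> (nat \<Rightarrow> 'v::real_vector) \<Rightarrow> (nat \<Rightarrow> 'v \<Rightarrow> real)
     \<Rightarrow> ('v \<Rightarrow> 'v \<Rightarrow> real) \<Rightarrow> ('v \<Rightarrow> 'v) set" where
  "Sigma_set n a av \<alpha> \<alpha>v B = {id} \<union> {sigma_j n a av \<alpha> \<alpha>v B j | j. j \<in> {1..n} \<and> a j = 1}"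

definition LL0 :: "'v::real_vector \<Rightarrow> ('v \<Rightarrow> real) \<Rightarrow> ('v \<Rightarrow> 'v) \<Rightarrow> real" where
  "LL0 \<Lambda>0 \<rho>v g = \<rho>v (\<Lambda>0 - g \<Lambda>0)"

end

theory Submission
  imports Defs
begin

lemma rep_V0:
  fixes n :: nat
  assumes "d \<in> span (\<alpha> ` {1..n})" "inj_on \<alpha> {0..n}"
  shows "\<exists>c. d = (\<Sum>i\<in>{1..n}. c i *\<^sub>R (\<alpha> i :: 'v::euclidean_space))"
proof -
  obtain u where u: "d = (\<Sum>v\<in>\<alpha> ` {1..n}. u v *\<^sub>R v)"
    using assms(1) span_finite[of "\<alpha> ` {1..n}"] by fastforce
  have inj: "inj_on \<alpha> {1..n}" using assms(2) by (rule inj_on_subset) auto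
  have "d = (\<Sum>i\<in>{1..n}. u (\<alpha> i) *\<^sub>R \<alpha> i)"
    using u sum.reindex[OF inj, of "\<lambda>v. u v *\<^sub>R v"] by simp
  then show ?thesis by (intro exI[of _ "\<lambda>i. u (\<alpha> i)"])
qed

lemma indep_V0:
  fixes n :: nat
  assumes "independent (\<alpha> ` {0..n})" "inj_on \<alpha> {0..n}"
    and "(\<Sum>i\<in>{1..n}. c i *\<^sub>R (\<alpha> i :: 'v::euclidean_space)) = 0" "i \<in> {1..n}"
  shows "c i = 0"
proof -
  have inj: "inj_on \<alpha> {1..n}" using assms(2) by (rule inj_on_subset) auto
  have ind: "independent (\<alpha> ` {1..n})"
    using assms(1) by (rule independent_mono) auto
  define c' where "c' v = c (inv_into {1..n} \<alpha> v)" for v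
  have "(\<Sum>v\<in>\<alpha> ` {1..n}. c' v *\<^sub>R v) = (\<Sum>i\<in>{1..n}. c' (\<alpha> i) *\<^sub>R \<alpha> i)"
    by (rule sum.reindex[OF inj, unfolded comp_def])
  also have "\<dots> = (\<Sum>i\<in>{1..n}. c i *\<^sub>R \<alpha> i)"
    by (rule sum.cong) (metis c'_def inv_into_f_f[OF inj])+
  finally have "(\<Sum>v\<in>\<alpha> ` {1..n}. c' v *\<^sub>R v) = 0" using assms(3) by simp
  moreover have "\<alpha> i \<in> \<alpha> ` {1..n}" using assms(4) by blast
  ultimately have "c' (\<alpha> i) = 0" using ind[unfolded independent_explicit] by auto
  then show ?thesis using assms(4) by (metis c'_def inv_into_f_f[OF inj])
qed

lemma inj_V0:
  fixes n :: nat and \<alpha> :: "nat \<Rightarrow> 'v::euclidean_space"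
  assumes aff: "affine_type n A" and re: "realization n A \<alpha> \<alpha>v"
    and pa: "prim_kernel_vec n A a" and pav: "prim_kernel_vec n (\<lambda>i j. A j i) av"
    and sf: "std_inv_form n \<alpha> \<alpha>v a av B"
    and d: "d \<in> span (\<alpha> ` {1..n})" and z: "\<forall>k\<in>{1..n}. B (\<alpha> k) d = 0"
  shows "d = 0"
proof -
  from re have inj: "inj_on \<alpha> {0..n}" and ind: "independent (\<alpha> ` {0..n})"
    and lin: "\<forall>i\<le>n. linear (\<alpha>v i)" and pair: "\<forall>i\<le>n. \<forall>j\<le>n. \<alpha>v i (\<alpha> j) = of_int (A i j)"
    by (auto simp: realization_def)
  obtain c where c: "d = (\<Sum>i\<in>{1..n}. c i *\<^sub>R \<alpha> i)" using rep_V0[OF d inj] by blast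
  have ev: "\<alpha>v k d = (\<Sum>i\<in>{1..n}. c i * of_int (A k i))" if "k \<le> n" for k
  proof -
    have "\<alpha>v k d = (\<Sum>i\<in>{1..n}. c i * \<alpha>v k (\<alpha> i))"
      using lin that by (simp add: c linear_sum linear_scale)
    also have "\<dots> = (\<Sum>i\<in>{1..n}. c i * of_int (A k i))"
      by (rule sum.cong) (use pair that in auto)
    finally show ?thesis .
  qed
  have zk: "\<alpha>v k d = 0" if "k \<in> {1..n}" for k
  proof -
    have "B d (\<alpha> k) = 0" using z that sf by (auto simp: std_inv_form_def)
    moreover have "B d (\<alpha> k) = (of_int (av k) / of_int (a k)) * \<alpha>v k d"
      using sf that by (simp add: std_inv_form_def)
    moreover have "av k > 0" "a k > 0" using pa pav that by (auto simp: prim_kernel_vec_def)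
    ultimately show ?thesis by simp
  qed
  define v where "v j = (if j = 0 then 0 else c j)" for j
  have mv: "mat_vec n A v k = (\<Sum>i\<in>{1..n}. c i * of_int (A k i))" for k
  proof -
    have e: "{..n} = insert 0 {1..n}" by auto
    have "mat_vec n A v k = (\<Sum>i\<in>{1..n}. of_int (A k i) * v i)"
      unfolding mat_vec_def e by (simp add: v_def)
    also have "\<dots> = (\<Sum>i\<in>{1..n}. c i * of_int (A k i))"
      by (rule sum.cong) (auto simp: v_def)
    finally show ?thesis .
  qed
  have mv0: "mat_vec n A v k = 0" if "k \<in> {1..n}" for k using mv ev zk that by simp
  have aff5: "\<forall>w. (\<forall>i\<le>n. mat_vec n A w i \<ge> 0) \<longrightarrow> (\<forall>i\<le>n. mat_vec n A w i = 0)"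
    using aff unfolding affine_type_def by blast
  have ker: "\<forall>i\<le>n. mat_vec n A v i = 0"
  proof (cases "mat_vec n A v 0 \<ge> 0")
    case True
    then have "\<forall>i\<le>n. mat_vec n A v i \<ge> 0" using mv0
      by (metis atLeastAtMost_iff le_numeral_extra(3) not_one_le_zero order_refl less_one not_less)
    then show ?thesis using aff5 by blast
  next
    case False
    have neg: "mat_vec n A (\<lambda>j. - v j) i = - mat_vec n A v i" for i
      by (simp add: mat_vec_def sum_negf)
    have "\<forall>i\<le>n. mat_vec n A (\<lambda>j. - v j) i \<ge> 0" unfolding neg using False mv0
      by (metis atLeastAtMost_iff less_one not_less neg_0_le_iff_le nle_le)
    then have "\<forall>i\<le>n. mat_vec n A (\<lambda>j. - v j) i = 0" using aff5 by blast
    then show ?thesis unfolding neg by simp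
  qed
  obtain u where ku: "\<forall>w. (\<forall>i\<le>n. mat_vec n A w i = 0) \<longrightarrow> (\<exists>t. \<forall>i\<le>n. w i = t * u i)"
    using aff unfolding affine_type_def by blast
  obtain u' where u'p: "\<forall>i\<le>n. u' i > 0" and u'k: "\<forall>i\<le>n. mat_vec n A u' i = 0"
    using aff unfolding affine_type_def by blast
  obtain t where t: "\<forall>i\<le>n. v i = t * u i" using ku ker by blast
  obtain t' where t': "\<forall>i\<le>n. u' i = t' * u i" using ku u'k by blast
  have "u 0 \<noteq> 0" using u'p t' by (metis le0 less_irrefl mult_zero_right)
  moreover have "v 0 = 0" by (simp add: v_def)
  ultimately have "t = 0" using t by simp
  then have "\<forall>i\<in>{1..n}. c i = 0" using t by (auto simp: v_def split: if_splits)
  then show ?thesis by (simp add: c)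
qed


lemma omv_prop:
  fixes n :: nat and \<alpha> :: "nat \<Rightarrow> 'v::euclidean_space"
  assumes aff: "affine_type n A" and re: "realization n A \<alpha> \<alpha>v"
    and pa: "prim_kernel_vec n A a" and pav: "prim_kernel_vec n (\<lambda>i j. A j i) av"
    and sf: "std_inv_form n \<alpha> \<alpha>v a av B" and j: "j \<in> {1..n}"
  shows "omv n \<alpha> B j \<in> span (\<alpha> ` {1..n}) \<and>
       (\<forall>k\<in>{1..n}. B (\<alpha> k) (omv n \<alpha> B j) = (if k = j then 1 else 0))"
proof -
  let ?V = "span (\<alpha> ` {1..n})"
  from re have inj: "inj_on \<alpha> {0..n}" and ind: "independent (\<alpha> ` {0..n})"
    by (auto simp: realization_def)
  have bl: "\<And>y. linear (B y)" and br: "\<And>y. linear (\<lambda>x. B x y)"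
    using sf by (auto simp: std_inv_form_def bilinear_def)
  define g where "g y = (\<Sum>k\<in>{1..n}. B (\<alpha> k) y *\<^sub>R \<alpha> k)" for y
  have lg: "linear g"
    by (rule linearI) (simp_all add: g_def linear_add[OF bl] linear_scale[OF bl]
        scaleR_add_left sum.distrib scaleR_sum_right)
  have gV: "g y \<in> ?V" for y
    unfolding g_def by (intro span_sum span_scale span_base) auto
  have ginj: "inj_on g ?V"
  proof (rule inj_onI)
    fix x y assume x: "x \<in> ?V" and y: "y \<in> ?V" and e: "g x = g y"
    have "g (x - y) = 0" using e by (simp add: linear_diff[OF lg])
    then have s0: "(\<Sum>k\<in>{1..n}. B (\<alpha> k) (x - y) *\<^sub>R \<alpha> k) = 0" by (simp add: g_def)
    have "\<forall>k\<in>{1..n}. B (\<alpha> k) (x - y) = 0"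
      using indep_V0[OF ind inj s0] by blast
    moreover have "x - y \<in> ?V" using x y by (rule span_diff)
    ultimately have "x - y = 0" using inj_V0[OF aff re pa pav sf] by blast
    then show "x = y" by simp
  qed
  have "dim (g ` ?V) = dim ?V" by (rule dim_image_eq[OF lg]) (simp only: span_span, rule ginj)
  then have gVV: "g ` ?V = ?V"
    by (intro subspace_dim_equal linear_subspace_image[OF lg] subspace_span) (use gV in auto)
  have "\<alpha> j \<in> ?V" using j by (intro span_base) auto
  then obtain y where y: "y \<in> ?V" "g y = \<alpha> j" using gVV by (metis imageE)
  have dl: "(\<Sum>k\<in>{1..n}. (if k = j then 1 else 0) *\<^sub>R \<alpha> k) = \<alpha> j"
    using j by (simp add: if_distrib[of "\<lambda>r. r *\<^sub>R _"] cong: if_cong)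
  have "(\<Sum>k\<in>{1..n}. (B (\<alpha> k) y - (if k = j then 1 else 0)) *\<^sub>R \<alpha> k) = g y - \<alpha> j"
    unfolding g_def dl[symmetric] by (simp add: scaleR_diff_left sum_subtractf)
  also have "\<dots> = 0" using y by simp
  finally have s0: "(\<Sum>k\<in>{1..n}. (B (\<alpha> k) y - (if k = j then 1 else 0)) *\<^sub>R \<alpha> k) = 0" .
  have "\<forall>k\<in>{1..n}. B (\<alpha> k) y - (if k = j then 1 else 0) = 0"
    using indep_V0[OF ind inj s0] by blast
  then have yp: "y \<in> ?V \<and> (\<forall>k\<in>{1..n}. B (\<alpha> k) y = (if k = j then 1 else 0))"
    using y by simp
  have uq: "z = y" if "z \<in> ?V \<and> (\<forall>k\<in>{1..n}. B (\<alpha> k) z = (if k = j then 1 else 0))" for z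
  proof -
    have "z - y = 0"
    proof (rule inj_V0[OF aff re pa pav sf])
      show "z - y \<in> ?V" using that yp by (intro span_diff) auto
      show "\<forall>k\<in>{1..n}. B (\<alpha> k) (z - y) = 0" using that yp by (simp add: linear_diff[OF bl])
    qed
    then show ?thesis by simp
  qed
  have "omv n \<alpha> B j = y" unfolding omv_def
    by (rule the_equality) (use yp uq in blast)+
  then show ?thesis using yp by simp
qed


lemma W0_fix:
  fixes n :: nat
  assumes "\<forall>i\<le>n. \<alpha>v i \<Lambda>0 = (if i = 0 then 1 else 0)" and "u \<in> gen_grp \<alpha> \<alpha>v {1..n}"
  shows "u \<Lambda>0 = (\<Lambda>0 :: 'v::real_vector)"
proof -
  obtain ws where ws: "u = wprod \<alpha> \<alpha>v ws" "set ws \<subseteq> {1..n}"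
    using assms(2) by (auto simp: gen_grp_def)
  have "wprod \<alpha> \<alpha>v ws \<Lambda>0 = \<Lambda>0" using ws(2)
  proof (induction ws)
    case Nil
    then show ?case by (simp add: wprod_def)
  next
    case (Cons i ws)
    then have "\<alpha>v i \<Lambda>0 = 0" using assms(1) by auto
    then show ?case using Cons by (simp add: wprod_def srefl_def)
  qed
  then show ?thesis using ws by simp
qed

theorem proposition2p6:
  fixes n :: nat and A :: "nat \<Rightarrow> nat \<Rightarrow> int"
    and \<alpha> :: "nat \<Rightarrow> 'v::euclidean_space" and \<alpha>v :: "nat \<Rightarrow> 'v \<Rightarrow> real"
    and a av :: "nat \<Rightarrow> int" and B :: "'v \<Rightarrow> 'v \<Rightarrow> real"
    and \<Lambda>0 :: 'v and \<rho>v :: "'v \<Rightarrow> real"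
    and x :: 'v and wb w :: "'v \<Rightarrow> 'v"
  assumes "affine_type n A"
    and "realization n A \<alpha> \<alpha>v"
    and "prim_kernel_vec n A a"
    and "prim_kernel_vec n (\<lambda>i j. A j i) av"
    and "av 0 = 1"
    and "std_inv_form n \<alpha> \<alpha>v a av B"
    and "\<forall>i\<le>n. \<alpha>v i \<Lambda>0 = (if i = 0 then 1 else 0)"
    and "linear \<rho>v" and "\<forall>i\<le>n. \<rho>v (\<alpha> i) = 1"
    and "x \<in> coweight_lattice n \<alpha> B"
    and "wb \<in> gen_grp \<alpha> \<alpha>v {1..n}"
    and "w = transl n a av \<alpha> \<alpha>v B x \<circ> wb"
  shows "LL0 \<Lambda>0 \<rho>v w = of_int (coxnum n a) / 2 * B x x - ht n \<alpha> x
    \<and> LL0 \<Lambda>0 \<rho>v w = LL0 \<Lambda>0 \<rho>v (transl n a av \<alpha> \<alpha>v B x)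
    \<and> (\<forall>\<sigma> v v0. \<sigma> \<in> Sigma_set n a av \<alpha> \<alpha>v B \<longrightarrow> v \<in> gen_grp \<alpha> \<alpha>v {0..n} \<longrightarrow> w = \<sigma> \<circ> v \<longrightarrow>
          v0 \<in> (\<lambda>u. v \<circ> u) ` gen_grp \<alpha> \<alpha>v {1..n} \<longrightarrow>
          (\<forall>u\<in>(\<lambda>u. v \<circ> u) ` gen_grp \<alpha> \<alpha>v {1..n}. wlen \<alpha> \<alpha>v {0..n} v0 \<le> wlen \<alpha> \<alpha>v {0..n} u) \<longrightarrow>
          LL0 \<Lambda>0 \<rho>v (\<sigma> \<circ> v) = LL0 \<Lambda>0 \<rho>v (\<sigma> \<circ> v0))"
proof -
  note as = assms
  from as(2) have inj: "inj_on \<alpha> {0..n}" and ind: "independent (\<alpha> ` {0..n})"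
    by (auto simp: realization_def)
  have bl: "\<And>y. linear (B y)"
    using as(6) by (auto simp: std_inv_form_def bilinear_def)
  let ?V = "span (\<alpha> ` {1..n})"
  obtain m where xm: "x = (\<Sum>j\<in>{1..n}. of_int (m j) *\<^sub>R omv n \<alpha> B j)"
    using as(10) by (auto simp: coweight_lattice_def)
  have "x \<in> ?V" unfolding xm
    by (intro span_sum span_scale) (use omv_prop[OF as(1-4) as(6)] in blast)
  then obtain c where c: "x = (\<Sum>i\<in>{1..n}. c i *\<^sub>R \<alpha> i)" using rep_V0 inj by blast
  have htx: "ht n \<alpha> x = (\<Sum>i\<in>{1..n}. c i)"
    unfolding ht_def
  proof (rule the_equality)
    show "\<exists>c'. x = (\<Sum>i\<in>{1..n}. c' i *\<^sub>R \<alpha> i) \<and> (\<Sum>i\<in>{1..n}. c i) = (\<Sum>i\<in>{1..n}. c' i)"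
      using c by blast
    fix s assume "\<exists>c'. x = (\<Sum>i\<in>{1..n}. c' i *\<^sub>R \<alpha> i) \<and> s = (\<Sum>i\<in>{1..n}. c' i)"
    then obtain c' where c': "x = (\<Sum>i\<in>{1..n}. c' i *\<^sub>R \<alpha> i)" "s = (\<Sum>i\<in>{1..n}. c' i)" by blast
    have s0: "(\<Sum>i\<in>{1..n}. (c' i - c i) *\<^sub>R \<alpha> i) = 0"
      using c c' by (simp add: scaleR_diff_left sum_subtractf)
    have "\<forall>i\<in>{1..n}. c' i - c i = 0" using indep_V0[OF ind inj s0] by blast
    then show "s = (\<Sum>i\<in>{1..n}. c i)" using c'(2) by (auto intro: sum.cong)
  qed
  have rx: "\<rho>v x = (\<Sum>i\<in>{1..n}. c i)"
    unfolding c using as(8,9) by (simp add: linear_sum linear_scale)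
  have bx: "B \<Lambda>0 x = 0"
  proof -
    have "B \<Lambda>0 x = (\<Sum>i\<in>{1..n}. c i * B \<Lambda>0 (\<alpha> i))"
      unfolding c by (simp add: linear_sum[OF bl] linear_scale[OF bl])
    also have "\<dots> = 0"
      by (rule sum.neutral) (use as(6,7) in \<open>auto simp: std_inv_form_def\<close>)
    finally show ?thesis .
  qed
  have cf: "cfun n av \<alpha>v \<Lambda>0 = 1"
  proof -
    have "cfun n av \<alpha>v \<Lambda>0 = (\<Sum>i\<le>n. (if i = 0 then of_int (av i) else 0))"
      unfolding cfun_def by (rule sum.cong) (use as(7) in auto)
    also have "\<dots> = 1" using as(5) by (simp add: sum.delta)
    finally show ?thesis .
  qed
  have rd: "\<rho>v (delta n a \<alpha>) = of_int (coxnum n a)"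
    unfolding delta_def coxnum_def using as(8,9) by (simp add: linear_sum linear_scale)
  have wL: "w \<Lambda>0 = transl n a av \<alpha> \<alpha>v B x \<Lambda>0"
    using as(12) W0_fix[OF as(7) as(11)] by simp
  have tL: "transl n a av \<alpha> \<alpha>v B x \<Lambda>0 = \<Lambda>0 + x - (1/2 * B x x) *\<^sub>R delta n a \<alpha>"
    unfolding transl_def cf bx by simp
  have L1: "LL0 \<Lambda>0 \<rho>v (transl n a av \<alpha> \<alpha>v B x) = of_int (coxnum n a) / 2 * B x x - ht n \<alpha> x"
    unfolding LL0_def tL htx rx[symmetric] using as(8) rd
    by (simp add: linear_diff linear_add linear_scale)
  have L2: "LL0 \<Lambda>0 \<rho>v w = LL0 \<Lambda>0 \<rho>v (transl n a av \<alpha> \<alpha>v B x)"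
    unfolding LL0_def wL ..
  have L3: "LL0 \<Lambda>0 \<rho>v (\<sigma> \<circ> v) = LL0 \<Lambda>0 \<rho>v (\<sigma> \<circ> v0)"
    if v0h: "v0 \<in> (\<lambda>u. v \<circ> u) ` gen_grp \<alpha> \<alpha>v {1..n}" for \<sigma> v v0
  proof -
    obtain u where u: "u \<in> gen_grp \<alpha> \<alpha>v {1..n}" "v0 = v \<circ> u" using v0h by blast
    show ?thesis using W0_fix[OF as(7) u(1)] u(2) by (simp add: LL0_def)
  qed
  show ?thesis
  proof (intro conjI allI impI)
    show "LL0 \<Lambda>0 \<rho>v w = of_int (coxnum n a) / 2 * B x x - ht n \<alpha> x" using L1 L2 by simp
    show "LL0 \<Lambda>0 \<rho>v w = LL0 \<Lambda>0 \<rho>v (transl n a av \<alpha> \<alpha>v B x)" by (rule L2)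
  next
    fix \<sigma> v v0
    assume "v0 \<in> (\<lambda>u. v \<circ> u) ` gen_grp \<alpha> \<alpha>v {1..n}"
    then show "LL0 \<Lambda>0 \<rho>v (\<sigma> \<circ> v) = LL0 \<Lambda>0 \<rho>v (\<sigma> \<circ> v0)" by (rule L3)
  qed
qed

end
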